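(* Let $G=(V,E)$ have positive edge weights $w$ with $w_e\le\lambda$ for all $e$, and let $OPT$ be the optimum of the bounded forest cover problem on $(G,w,\lambda)$. Define $w'_e=1$ if $w_e>\lambda/2$ and $w'_e=2w_e/\lambda$ otherwise, and let $OPT'$ be the minimum weighted index of a forest cover of $G$ with respect to $w'$. Then $OPT'\le 3\cdot OPT$.
   Context: Bounded forest cover: given a graph $G$ with positive edge weights $w$ and $\lambda\ge0$, find trees $T_1,\dots,T_k$ in $G$, each of total edge weight at most $\lambda$, such that $\bigcup_i V(T_i)$ is a vertex cover of $G$, minimizing $k$. A forest cover of $G$ is a forest $F\subseteq G$ (single-vertex trees allowed) whose vertex set is a vertex cover of $G$; with weights $w'$, its weighted index is $wi(F)=\sum_{e\in E(F)}w'_e+(\text{number of trees of }F)$. *)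

theory Defs
  imports "HOL-Analysis.Analysis"
begin

definition simple_graph :: "'a set \<Rightarrow> 'a set set \<Rightarrow> bool" where
  "simple_graph V E \<longleftrightarrow> finite V \<and> (\<forall>e\<in>E. e \<subseteq> V \<and> card e = 2)"

definition adj_rel :: "'a set set \<Rightarrow> ('a \<times> 'a) set" where
  "adj_rel EH = {(u, v). {u, v} \<in> EH}"

definition subgraph :: "'a set \<Rightarrow> 'a set set \<Rightarrow> 'a set \<Rightarrow> 'a set set \<Rightarrow> bool" where
  "subgraph V E VH EH \<longleftrightarrow> VH \<subseteq> V \<and> EH \<subseteq> E \<and> (\<forall>e\<in>EH. e \<subseteq> VH)"

definition connected_graph :: "'a set \<Rightarrow> 'a set set \<Rightarrow> bool" where
  "connected_graph VH EH \<longleftrightarrow> (\<forall>u\<in>VH. \<forall>v\<in>VH. (u, v) \<in> (adj_rel EH)\<^sup>*)"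

text \<open>Acyclic: no edge lies on a cycle, i.e. removing any edge disconnects its endpoints.\<close>
definition acyclic_graph :: "'a set set \<Rightarrow> bool" where
  "acyclic_graph EH \<longleftrightarrow>
     (\<forall>e\<in>EH. \<forall>u v. e = {u, v} \<longrightarrow> (u, v) \<notin> (adj_rel (EH - {e}))\<^sup>*)"

text \<open>A tree in G (single-vertex trees allowed).\<close>
definition is_tree_in :: "'a set \<Rightarrow> 'a set set \<Rightarrow> 'a set \<Rightarrow> 'a set set \<Rightarrow> bool" where
  "is_tree_in V E VT ET \<longleftrightarrow> subgraph V E VT ET \<and> VT \<noteq> {} \<and>
     connected_graph VT ET \<and> acyclic_graph ET"

definition is_forest_in :: "'a set \<Rightarrow> 'a set set \<Rightarrow> 'a set \<Rightarrow> 'a set set \<Rightarrow> bool" where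
  "is_forest_in V E VF EF \<longleftrightarrow> subgraph V E VF EF \<and> acyclic_graph EF"

definition vertex_cover :: "'a set set \<Rightarrow> 'a set \<Rightarrow> bool" where
  "vertex_cover E C \<longleftrightarrow> (\<forall>e\<in>E. e \<inter> C \<noteq> {})"

definition num_components :: "'a set \<Rightarrow> 'a set set \<Rightarrow> nat" where
  "num_components VH EH = card {{u\<in>VH. (v, u) \<in> (adj_rel EH)\<^sup>*} | v. v \<in> VH}"

definition bounded_tree_cover ::
  "'a set \<Rightarrow> 'a set set \<Rightarrow> ('a set \<Rightarrow> real) \<Rightarrow> real \<Rightarrow> ('a set \<times> 'a set set) list \<Rightarrow> bool" where
  "bounded_tree_cover V E w lam Ts \<longleftrightarrow>
     (\<forall>(VT, ET)\<in>set Ts. is_tree_in V E VT ET \<and> (\<Sum>e\<in>ET. w e) \<le> lam) \<and>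
     vertex_cover E (\<Union>(VT, ET)\<in>set Ts. VT)"

definition OPT_bfc :: "'a set \<Rightarrow> 'a set set \<Rightarrow> ('a set \<Rightarrow> real) \<Rightarrow> real \<Rightarrow> nat" where
  "OPT_bfc V E w lam = (LEAST k. \<exists>Ts. length Ts = k \<and> bounded_tree_cover V E w lam Ts)"

definition forest_cover :: "'a set \<Rightarrow> 'a set set \<Rightarrow> 'a set \<Rightarrow> 'a set set \<Rightarrow> bool" where
  "forest_cover V E VF EF \<longleftrightarrow> is_forest_in V E VF EF \<and> vertex_cover E VF"

definition weighted_index :: "('a set \<Rightarrow> real) \<Rightarrow> 'a set \<Rightarrow> 'a set set \<Rightarrow> real" where
  "weighted_index w' VF EF = (\<Sum>e\<in>EF. w' e) + real (num_components VF EF)"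

definition OPT_wi :: "'a set \<Rightarrow> 'a set set \<Rightarrow> ('a set \<Rightarrow> real) \<Rightarrow> real" where
  "OPT_wi V E w' = Min {weighted_index w' VF EF | VF EF. forest_cover V E VF EF}"

definition scaled_weight :: "('a set \<Rightarrow> real) \<Rightarrow> real \<Rightarrow> 'a set \<Rightarrow> real" where
  "scaled_weight w lam e = (if w e > lam / 2 then 1 else 2 * w e / lam)"

end

theory Submission
  imports Defs
begin

lemma adj_mono: "A \<subseteq> B \<Longrightarrow> adj_rel A \<subseteq> adj_rel B"
  unfolding adj_rel_def by auto

lemma adj_sym: "(x, y) \<in> (adj_rel X)\<^sup>* \<Longrightarrow> (y, x) \<in> (adj_rel X)\<^sup>*"
proof (induction rule: rtrancl_induct)
  case base then show ?case by simp
next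
  case (step y z)
  have "(z, y) \<in> adj_rel X" using step(2) unfolding adj_rel_def by (auto simp: insert_commute)
  then show ?case using step(3) by (rule converse_rtrancl_into_rtrancl)
qed

lemma remove_edge:
  assumes "e \<in> F" "e = {u, v}" "(u, v) \<in> (adj_rel (F - {e}))\<^sup>*"
  shows "(adj_rel F)\<^sup>* = (adj_rel (F - {e}))\<^sup>*"
proof
  show "(adj_rel (F - {e}))\<^sup>* \<subseteq> (adj_rel F)\<^sup>*"
    by (rule rtrancl_mono, rule adj_mono) auto
  have "adj_rel F \<subseteq> (adj_rel (F - {e}))\<^sup>*"
  proof
    fix p assume "p \<in> adj_rel F"
    then obtain a b where p: "p = (a, b)" "{a, b} \<in> F" unfolding adj_rel_def by auto
    show "p \<in> (adj_rel (F - {e}))\<^sup>*"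
    proof (cases "{a, b} = e")
      case False
      then have "(a, b) \<in> adj_rel (F - {e})" using p unfolding adj_rel_def by auto
      then show ?thesis using p by auto
    next
      case True
      then have "(a = u \<and> b = v) \<or> (a = v \<and> b = u)" using assms(2) by (auto simp: doubleton_eq_iff)
      then show ?thesis
      proof
        assume "a = u \<and> b = v" then show ?thesis using assms(3) p(1) by simp
      next
        assume "a = v \<and> b = u" then show ?thesis using adj_sym[OF assms(3)] p(1) by simp
      qed
    qed
  qed
  then show "(adj_rel F)\<^sup>* \<subseteq> (adj_rel (F - {e}))\<^sup>*" by (rule rtrancl_subset_rtrancl)
qed

lemma spanning:
  assumes "finite EH"
  shows "\<exists>EF \<subseteq> EH. (adj_rel EF)\<^sup>* = (adj_rel EH)\<^sup>* \<and> acyclic_graph EF"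
proof -
  define P where "P F \<longleftrightarrow> F \<subseteq> EH \<and> (adj_rel F)\<^sup>* = (adj_rel EH)\<^sup>*" for F
  have "P EH" unfolding P_def by simp
  then obtain F where F: "P F" and min: "\<And>G. P G \<Longrightarrow> card F \<le> card G"
    using ex_has_least_nat[of P EH card] by blast
  have fin: "finite F" using F assms unfolding P_def by (auto intro: finite_subset)
  have "acyclic_graph F"
    unfolding acyclic_graph_def
  proof (intro ballI allI impI notI)
    fix e u v assume e: "e \<in> F" "e = {u, v}" "(u, v) \<in> (adj_rel (F - {e}))\<^sup>*"
    have "F - {e} \<subseteq> EH" using F unfolding P_def by blast
    moreover have "(adj_rel (F - {e}))\<^sup>* = (adj_rel EH)\<^sup>*"
      using remove_edge[OF e] F unfolding P_def by argo
    ultimately have "P (F - {e})" unfolding P_def by blast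
    then have "card F \<le> card (F - {e})" by (rule min)
    moreover have "card (F - {e}) < card F" using fin e(1) by (meson card_Diff1_less)
    ultimately show False by simp
  qed
  then show ?thesis using F unfolding P_def by blast
qed

lemma sum_union_le:
  fixes f :: "'b \<Rightarrow> real"
  assumes "finite I" "\<And>i. i \<in> I \<Longrightarrow> finite (A i)" "\<And>x. x \<in> (\<Union>i\<in>I. A i) \<Longrightarrow> f x \<ge> 0"
  shows "sum f (\<Union>i\<in>I. A i) \<le> (\<Sum>i\<in>I. sum f (A i))"
  using assms
proof (induction I rule: finite_induct)
  case empty then show ?case by simp
next
  case (insert i I)
  have IH: "sum f (\<Union>j\<in>I. A j) \<le> (\<Sum>j\<in>I. sum f (A j))"
    by (rule insert.IH) (simp_all add: insert.prems)
  have fA: "finite (A i)" by (simp add: insert.prems)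
  have fU: "finite (\<Union>j\<in>I. A j)" using insert.hyps(1) insert.prems(1) by simp
  have nn: "sum f (A i \<inter> (\<Union>j\<in>I. A j)) \<ge> 0"
    by (rule sum_nonneg) (simp add: insert.prems(2))
  have eq: "sum f (A i \<union> (\<Union>j\<in>I. A j)) = sum f (A i) + sum f (\<Union>j\<in>I. A j) - sum f (A i \<inter> (\<Union>j\<in>I. A j))"
    using sum_Un[OF fA fU, of f] by simp
  have "sum f (\<Union>j\<in>insert i I. A j) = sum f (A i \<union> (\<Union>j\<in>I. A j))" by simp
  also have "\<dots> \<le> sum f (A i) + (\<Sum>j\<in>I. sum f (A j))" using eq nn IH by linarith
  also have "\<dots> = (\<Sum>j\<in>insert i I. sum f (A j))" using insert.hyps by simp
  finally show ?case .
qed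

theorem mainTheorem10:
  fixes V :: "'a set" and E :: "'a set set" and w :: "'a set \<Rightarrow> real" and lam :: real
  assumes "simple_graph V E"
    and "lam \<ge> 0"
    and "\<forall>e\<in>E. 0 < w e \<and> w e \<le> lam"
  shows "OPT_wi V E (scaled_weight w lam) \<le> 3 * real (OPT_bfc V E w lam)"
proof -
  have finV: "finite V" using assms(1) unfolding simple_graph_def by auto
  have EV: "\<And>e. e \<in> E \<Longrightarrow> e \<subseteq> V \<and> card e = 2" using assms(1) unfolding simple_graph_def by auto
  have finE: "finite E" by (rule finite_subset[of E "Pow V"]) (use EV finV in auto)
  define w' where "w' = scaled_weight w lam"
  obtain xs where xs: "set xs = V" using finite_list[OF finV] by blast
  have "bounded_tree_cover V E w lam (map (\<lambda>v. ({v}, {})) xs)"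
    unfolding bounded_tree_cover_def
  proof
    show "\<forall>(VT, ET)\<in>set (map (\<lambda>v. ({v}, {})) xs). is_tree_in V E VT ET \<and> (\<Sum>e\<in>ET. w e) \<le> lam"
      using xs assms(2)
      by (auto simp: is_tree_in_def subgraph_def connected_graph_def acyclic_graph_def)
    have "(\<Union>(VT, ET)\<in>set (map (\<lambda>v. ({v}, {}::'a set set)) xs). VT) = V" using xs by auto
    moreover have "vertex_cover E V"
      unfolding vertex_cover_def
    proof
      fix e assume "e \<in> E"
      then have "e \<subseteq> V" "card e = 2" using EV by auto
      moreover have "e \<noteq> {}" using \<open>card e = 2\<close> by (metis card.empty zero_neq_numeral)
      ultimately show "e \<inter> V \<noteq> {}" by blast
    qed
    ultimately show "vertex_cover E (\<Union>(VT, ET)\<in>set (map (\<lambda>v. ({v}, {}::'a set set)) xs). VT)" by simp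
  qed
  then have ex: "\<exists>k. \<exists>Ts. length Ts = k \<and> bounded_tree_cover V E w lam Ts" by blast
  have "\<exists>Ts. length Ts = OPT_bfc V E w lam \<and> bounded_tree_cover V E w lam Ts"
    unfolding OPT_bfc_def by (rule LeastI_ex[OF ex])
  then obtain Ts where Ts: "length Ts = OPT_bfc V E w lam" "bounded_tree_cover V E w lam Ts"
    by blast
  define k where "k = length Ts"
  define VT where "VT i = fst (Ts ! i)" for i
  define ET where "ET i = snd (Ts ! i)" for i
  have tree: "\<And>i. i < k \<Longrightarrow> is_tree_in V E (VT i) (ET i) \<and> (\<Sum>e\<in>ET i. w e) \<le> lam"
  proof -
    fix i assume "i < k"
    then have mem: "Ts ! i \<in> set Ts" unfolding k_def by simp
    obtain a b where ab: "Ts ! i = (a, b)" by fastforce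
    have all: "\<forall>(VT, ET)\<in>set Ts. is_tree_in V E VT ET \<and> (\<Sum>e\<in>ET. w e) \<le> lam"
      using Ts(2) unfolding bounded_tree_cover_def by blast
    have "is_tree_in V E a b \<and> (\<Sum>e\<in>b. w e) \<le> lam"
      using bspec[OF all mem] ab by simp
    then show "is_tree_in V E (VT i) (ET i) \<and> (\<Sum>e\<in>ET i. w e) \<le> lam"
      unfolding VT_def ET_def ab by simp
  qed
  define VH where "VH = (\<Union>i<k. VT i)"
  define EH where "EH = (\<Union>i<k. ET i)"
  have VHeq: "VH = (\<Union>(VT, ET)\<in>set Ts. VT)"
  proof -
    have st: "set Ts = (\<lambda>i. Ts ! i) ` {..<k}" unfolding k_def by (auto simp: set_conv_nth)
    show ?thesis unfolding st VH_def VT_def by (simp add: image_image case_prod_beta)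
  qed
  have cover: "vertex_cover E VH" using Ts(2) VHeq unfolding bounded_tree_cover_def by simp
  have ETsub: "\<And>i. i < k \<Longrightarrow> ET i \<subseteq> E \<and> (\<forall>e\<in>ET i. e \<subseteq> VT i) \<and> VT i \<subseteq> V"
    using tree unfolding is_tree_in_def subgraph_def by blast
  have EHE: "EH \<subseteq> E" unfolding EH_def using ETsub by blast
  have finEH: "finite EH" using EHE finE by (rule finite_subset)
  obtain EF where EF: "EF \<subseteq> EH" "(adj_rel EF)\<^sup>* = (adj_rel EH)\<^sup>*" "acyclic_graph EF"
    using spanning[OF finEH] by blast
  have fc: "forest_cover V E VH EF"
  proof -
    have "VH \<subseteq> V" unfolding VH_def using ETsub by blast
    moreover have "EF \<subseteq> E" using EF(1) EHE by blast
    moreover have "\<forall>e\<in>EF. e \<subseteq> VH"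
    proof
      fix e assume "e \<in> EF"
      then have "e \<in> EH" using EF(1) by blast
      then obtain i where "i < k" "e \<in> ET i" unfolding EH_def by blast
      then have "e \<subseteq> VT i" using ETsub by blast
      then show "e \<subseteq> VH" unfolding VH_def using \<open>i < k\<close> by blast
    qed
    ultimately show ?thesis unfolding forest_cover_def is_forest_in_def subgraph_def
      using cover EF(3) by blast
  qed
  define r where "r i = (SOME x. x \<in> VT i)" for i
  have r: "\<And>i. i < k \<Longrightarrow> r i \<in> VT i"
  proof -
    fix i assume "i < k"
    then have "VT i \<noteq> {}" using tree unfolding is_tree_in_def by blast
    then show "r i \<in> VT i" unfolding r_def by (simp add: some_in_eq)
  qed
  define C where "C v = {u \<in> VH. (v, u) \<in> (adj_rel EF)\<^sup>*}" for v
  have comp_sub: "{{u\<in>VH. (v, u) \<in> (adj_rel EF)\<^sup>*} | v. v \<in> VH} \<subseteq> (\<lambda>i. C (r i)) ` {..<k}"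
  proof
    fix X assume "X \<in> {{u\<in>VH. (v, u) \<in> (adj_rel EF)\<^sup>*} | v. v \<in> VH}"
    then obtain v where v: "v \<in> VH" "X = C v" unfolding C_def by blast
    then obtain i where i: "i < k" "v \<in> VT i" unfolding VH_def by blast
    have "connected_graph (VT i) (ET i)" using tree[OF i(1)] unfolding is_tree_in_def by blast
    then have "(r i, v) \<in> (adj_rel (ET i))\<^sup>*" using r[OF i(1)] i(2) unfolding connected_graph_def by blast
    moreover have "(adj_rel (ET i))\<^sup>* \<subseteq> (adj_rel EF)\<^sup>*"
      unfolding EF(2) by (rule rtrancl_mono, rule adj_mono) (use i(1) in \<open>auto simp: EH_def\<close>)
    ultimately have rv: "(r i, v) \<in> (adj_rel EF)\<^sup>*" by blast
    then have vr: "(v, r i) \<in> (adj_rel EF)\<^sup>*" by (rule adj_sym)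
    have "C v = C (r i)" unfolding C_def using rv vr by (auto intro: rtrancl_trans)
    then show "X \<in> (\<lambda>i. C (r i)) ` {..<k}" using v i by auto
  qed
  have ncomp: "num_components VH EF \<le> k"
    unfolding num_components_def
    using card_mono[OF _ comp_sub] card_image_le[of "{..<k}" "\<lambda>i. C (r i)"] by simp
  have w'0: "\<And>e. e \<in> E \<Longrightarrow> w' e \<ge> 0"
    using assms(2,3) unfolding w'_def scaled_weight_def by auto
  have tree_w: "\<And>i. i < k \<Longrightarrow> sum w' (ET i) \<le> 2"
  proof -
    fix i assume i: "i < k"
    show "sum w' (ET i) \<le> 2"
    proof (cases "ET i = {}")
      case True then show ?thesis by simp
    next
      case False
      then obtain e0 where "e0 \<in> ET i" by blast
      then have "e0 \<in> E" using ETsub[OF i] by blast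
      then have lam: "lam > 0" using assms(3) by force
      have "sum w' (ET i) \<le> sum (\<lambda>e. 2 * w e / lam) (ET i)"
      proof (rule sum_mono)
        fix e assume "e \<in> ET i"
        then have "e \<in> E" using ETsub[OF i] by blast
        then have "w e > 0" using assms(3) by blast
        show "w' e \<le> 2 * w e / lam"
        proof (cases "w e > lam / 2")
          case True
          then have "2 * w e / lam > 1" using lam by (simp add: field_simps)
          then show ?thesis using True unfolding w'_def scaled_weight_def by simp
        qed (simp add: w'_def scaled_weight_def)
      qed
      also have "\<dots> = 2 / lam * sum w (ET i)" by (simp add: sum_distrib_left)
      also have "\<dots> \<le> 2 / lam * lam" using tree[OF i] lam by (intro mult_left_mono) auto
      also have "\<dots> = 2" using lam by simp
      finally show ?thesis .
    qed
  qed
  have finET: "\<And>i. i \<in> {..<k} \<Longrightarrow> finite (ET i)"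
  proof -
    fix i assume "i \<in> {..<k}"
    then have "ET i \<subseteq> E" using ETsub by blast
    then show "finite (ET i)" using finE by (rule finite_subset)
  qed
  have w'EH: "\<And>x. x \<in> EH \<Longrightarrow> w' x \<ge> 0" using w'0 EHE by blast
  have "sum w' EF \<le> sum w' EH"
    by (rule sum_mono2[OF finEH EF(1)]) (use w'EH in blast)
  also have "\<dots> \<le> (\<Sum>i<k. sum w' (ET i))"
    unfolding EH_def
    by (rule sum_union_le) (use finET w'EH in \<open>simp_all add: EH_def\<close>)
  also have "\<dots> \<le> (\<Sum>i<k. 2)" by (rule sum_mono) (simp add: tree_w)
  finally have wEF: "sum w' EF \<le> 2 * real k" by simp
  have wi: "weighted_index w' VH EF \<le> 3 * real k"
    unfolding weighted_index_def using wEF ncomp by linarith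
  have fin: "finite {weighted_index w' VF EF | VF EF. forest_cover V E VF EF}"
  proof -
    have "{weighted_index w' VF EF | VF EF. forest_cover V E VF EF}
          \<subseteq> (\<lambda>(VF, EF). weighted_index w' VF EF) ` (Pow V \<times> Pow E)"
      unfolding forest_cover_def is_forest_in_def subgraph_def by auto
    moreover have "finite ((\<lambda>(VF, EF). weighted_index w' VF EF) ` (Pow V \<times> Pow E))"
      using finV finE by simp
    ultimately show ?thesis by (rule finite_subset)
  qed
  have "OPT_wi V E w' \<le> weighted_index w' VH EF"
    unfolding OPT_wi_def using fc fin by (intro Min_le) auto
  then show ?thesis using wi Ts(1) unfolding k_def w'_def by simp
qed

end
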